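(* Let $d \geq 1$ and let $A \subset \mathbb{Z}^d$ be a set consisting of exactly $d+2$ elements such that the difference set $A - A = \{a - a' : a, a' \in A\}$ generates $\mathbb{Z}^d$ additively. Let $\Delta_A$ denote the convex hull of $A$ and $\mathrm{vol}(\Delta_A)$ its $d$-dimensional volume. Then \[ |hA| = \binom{h+d+1}{d+1} \qquad \text{whenever } 0 \leq h < \mathrm{vol}(\Delta_A)\cdot d! - d - 1, \] and \[ |hA| = \binom{h+d+1}{d+1} - \binom{h - \mathrm{vol}(\Delta_A)\cdot d! + d + 1}{d+1} \qquad \text{whenever } h \geq \mathrm{vol}(\Delta_A)\cdot d! - d - 1 . \]
   Context: For a finite set $A \subset \mathbb{Z}^d$ and an integer $h \geq 0$, the $h$-fold sumset is $hA = \{x_1 + \cdots + x_h : x_i \in A\}$ (with $0A = \{0\}$); $h$ ranges over integers. *)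

theory Defs
  imports "HOL-Analysis.Analysis"
begin

fun sumset :: "nat \<Rightarrow> 'a::comm_monoid_add set \<Rightarrow> 'a set" where
  "sumset 0 A = {0}"
| "sumset (Suc h) A = {x + y | x y. x \<in> sumset h A \<and> y \<in> A}"

definition diffset :: "'a::ab_group_add set \<Rightarrow> 'a set" where
  "diffset A = {a - b | a b. a \<in> A \<and> b \<in> A}"

definition add_subgroup_gen :: "'a::ab_group_add set \<Rightarrow> 'a set" where
  "add_subgroup_gen S = \<Inter>{G. S \<subseteq> G \<and> 0 \<in> G \<and> (\<forall>x\<in>G. \<forall>y\<in>G. x - y \<in> G)}"

definition lat_to_real :: "int ^ 'd \<Rightarrow> real ^ 'd" where
  "lat_to_real x = (\<chi> i. real_of_int (x $ i))"

end

theory Submission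
  imports Defs
begin

lemma det_shear_general:
  fixes m n :: "'n::finite"
  assumes "m \<noteq> n"
  shows "det (matrix (\<lambda>v::real^'n. \<chi> i. if i = m then v $ m + v $ n else v $ i)) = 1"
proof -
  have eq: "matrix (\<lambda>v::real^'n. \<chi> i. if i = m then v $ m + v $ n else v $ i)
      = (\<chi> k. if k = m then row m (mat 1) + 1 *s row n (mat 1) else row k (mat 1 :: real^'n^'n))"
    by (auto simp: matrix_def vec_eq_iff axis_def row_def mat_def)
  show ?thesis unfolding eq using det_row_operation[OF assms, of "mat 1 :: real^'n^'n" 1] by simp
qed

proposition
 fixes f :: "real^'n::finite \<Rightarrow> real^'n"
  assumes "linear f" "S \<in> lmeasurable"
  shows measurable_linear_image_gen: "(f ` S) \<in> lmeasurable"
    and measure_linear_image_gen: "measure lebesgue (f ` S) = \<bar>det (matrix f)\<bar> * measure lebesgue S" (is "?Q f S")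
proof -
  have "\<forall>S \<in> lmeasurable. (f ` S) \<in> lmeasurable \<and> ?Q f S"
  proof (rule induct_linear_elementary [OF \<open>linear f\<close>]; intro ballI)
    fix f g and S :: "(real,'n) vec set"
    assume "linear f" and "linear g"
      and f [rule_format]: "\<forall>S \<in> lmeasurable. f ` S \<in> lmeasurable \<and> ?Q f S"
      and g [rule_format]: "\<forall>S \<in> lmeasurable. g ` S \<in> lmeasurable \<and> ?Q g S"
      and S: "S \<in> lmeasurable"
    then have gS: "g ` S \<in> lmeasurable"
      by blast
    show "(f \<circ> g) ` S \<in> lmeasurable \<and> ?Q (f \<circ> g) S"
      using f [OF gS] g [OF S] matrix_compose [OF \<open>linear g\<close> \<open>linear f\<close>]
      by (simp add: o_def image_comp abs_mult det_mul)
  next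
    fix f :: "real^'n::_ \<Rightarrow> real^'n::_" and i and S :: "(real^'n::_) set"
    assume "linear f" and 0: "\<And>x. f x $ i = 0" and "S \<in> lmeasurable"
    then have "\<not> inj f"
      by (metis (full_types) linear_injective_imp_surjective one_neq_zero surjE vec_component)
    have detf: "det (matrix f) = 0"
      using \<open>\<not> inj f\<close> det_nz_iff_inj[OF \<open>linear f\<close>] by blast
    show "f ` S \<in> lmeasurable \<and> ?Q f S"
    proof
      show "f ` S \<in> lmeasurable"
        using lmeasurable_iff_indicator_has_integral \<open>linear f\<close> \<open>\<not> inj f\<close> negligible_UNIV negligible_linear_singular_image by blast
      have "measure lebesgue (f ` S) = 0"
        by (meson \<open>\<not> inj f\<close> \<open>linear f\<close> negligible_imp_measure0 negligible_linear_singular_image)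
      also have "\<dots> = \<bar>det (matrix f)\<bar> * measure lebesgue S"
        by (simp add: detf)
      finally show "?Q f S" .
    qed
  next
    fix c and S :: "(real^'n::_) set"
    assume "S \<in> lmeasurable"
    show "(\<lambda>a. \<chi> i. c i * a $ i) ` S \<in> lmeasurable \<and> ?Q (\<lambda>a. \<chi> i. c i * a $ i) S"
    proof
      show "(\<lambda>a. \<chi> i. c i * a $ i) ` S \<in> lmeasurable"
        by (simp add: \<open>S \<in> lmeasurable\<close> measurable_stretch)
      show "?Q (\<lambda>a. \<chi> i. c i * a $ i) S"
        by (simp add: measure_stretch [OF \<open>S \<in> lmeasurable\<close>, of c] axis_def matrix_def det_diagonal)
    qed
  next
    fix m :: "'n" and n :: "'n" and S :: "(real, 'n) vec set"
    assume "m \<noteq> n" and "S \<in> lmeasurable"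
    let ?h = "\<lambda>v::(real, 'n) vec. \<chi> i. v $ Transposition.transpose m n i"
    have lin: "linear ?h"
      by (rule linearI) (simp_all add: plus_vec_def scaleR_vec_def)
    have meq: "measure lebesgue ((\<lambda>v::(real, 'n) vec. \<chi> i. v $ Transposition.transpose m n i) ` cbox a b)
             = measure lebesgue (cbox a b)" for a b
    proof (cases "cbox a b = {}")
      case True then show ?thesis
        by simp
    next
      case False
      then have him: "?h ` (cbox a b) \<noteq> {}"
        by blast
      have eq: "?h ` (cbox a b) = cbox (?h a) (?h b)"
        by (auto simp: image_iff lambda_swap_Galois mem_box_cart) (metis transpose_involutory)+
      show ?thesis
        using him prod.permute [OF permutes_swap_id, where S=UNIV and g="\<lambda>i. (b - a)$i", symmetric]
        by (simp add: eq content_cbox_cart False)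
    qed
    have "(\<chi> i j. if Transposition.transpose m n i = j then 1 else 0) = (\<chi> i j. if j = Transposition.transpose m n i then 1 else (0::real))"
      by (auto intro!: Cart_lambda_cong)
    then have "matrix ?h = transpose(\<chi> i j. mat 1 $ i $ Transposition.transpose m n j)"
      by (auto simp: matrix_eq transpose_def axis_def mat_def matrix_def)
    then have 1: "\<bar>det (matrix ?h)\<bar> = 1"
      by (simp add: det_permute_columns permutes_swap_id sign_swap_id abs_mult)
    show "?h ` S \<in> lmeasurable \<and> ?Q ?h S"
      using measure_linear_sufficient [OF lin \<open>S \<in> lmeasurable\<close>] meq 1 by force
  next
    fix m n :: "'n" and S :: "(real, 'n) vec set"
    assume "m \<noteq> n" and "S \<in> lmeasurable"
    let ?h = "\<lambda>v::(real, 'n) vec. \<chi> i. if i = m then v $ m + v $ n else v $ i"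
    have lin: "linear ?h"
      by (rule linearI) (auto simp: algebra_simps plus_vec_def scaleR_vec_def vec_eq_iff)
    have 1: "det(matrix ?h) = 1"
      using det_shear_general[OF \<open>m \<noteq> n\<close>] .
    have meq: "measure lebesgue (?h ` (cbox a b)) = measure lebesgue (cbox a b)" for a b
    proof (cases "cbox a b = {}")
      case True then show ?thesis by simp
    next
      case False
      then have ne: "(+) (\<chi> i. if i = n then - a $ n else 0) ` cbox a b \<noteq> {}"
        by auto
      let ?v = "\<chi> i. if i = n then - a $ n else 0"
      have "?h ` cbox a b
            = (+) (\<chi> i. if i = m \<or> i = n then a $ n else 0) ` ?h ` (+) ?v ` (cbox a b)"
        using \<open>m \<noteq> n\<close> unfolding image_comp o_def by (force simp: vec_eq_iff)
      then have "measure lebesgue (?h ` (cbox a b))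
               = measure lebesgue ((\<lambda>v. \<chi> i. if i = m then v $ m + v $ n else v $ i) `
                                   (+) ?v ` cbox a b)"
        by (rule ssubst) (rule measure_translation)
      also have "\<dots> = measure lebesgue ((\<lambda>v. \<chi> i. if i = m then v $ m + v $ n else v $ i) ` cbox (?v +a) (?v + b))"
        by (metis (no_types, lifting) cbox_translation)
      also have "\<dots> = measure lebesgue ((+) ?v ` cbox a b)"
        apply (subst measure_shear_interval)
        using \<open>m \<noteq> n\<close> ne apply auto
        apply (simp add: cbox_translation)
        by (metis cbox_borel cbox_translation measure_completion sets_lborel)
      also have "\<dots> = measure lebesgue (cbox a b)"
        by (rule measure_translation)
        finally show ?thesis .
      qed
    show "?h ` S \<in> lmeasurable \<and> ?Q ?h S"
      using measure_linear_sufficient [OF lin \<open>S \<in> lmeasurable\<close>] meq 1 by force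
  qed
  with assms show "(f ` S) \<in> lmeasurable" "?Q f S"
    by metis+
qed

lemma content_simplex_gen:
  fixes x0 :: "real ^ 'n::finite" and f :: "'n \<Rightarrow> real ^ 'n"
  shows "measure lebesgue (convex hull (insert x0 (range f))) =
     \<bar>det (\<chi> i j. f j $ i - x0 $ i)\<bar> / fact (CARD('n))"
proof -
  define M where "M = (\<chi> i j. f j $ i - x0 $ i)"
  define g where "g = (\<lambda>x. M *v x)"
  have [simp]: "M *v axis i 1 = f i - x0" for i :: 'n
    by (simp add: M_def matrix_vector_mult_basis column_def vec_eq_iff)
  define std where "std = (convex hull insert 0 Basis :: (real ^ 'n :: _) set)"
  have compact: "compact std" unfolding std_def
    by (intro finite_imp_compact_convex_hull) auto
  have "measure lebesgue (convex hull (insert x0 (range f))) = measure lebesgue (((+) (-x0)) ` (convex hull (insert x0 (range f))))"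
    by (rule measure_translation [symmetric])
  also have "((+) (-x0)) ` (convex hull (insert x0 (range f))) = convex hull (((+) (-x0)) ` (insert x0 (range f)))"
    by (rule convex_hull_translation [symmetric])
  also have "((+) (-x0)) ` (insert x0 (range f)) = insert 0 ((\<lambda>x. x - x0) ` (range f))"
    by (auto simp: image_iff)
  finally have eq: "measure lebesgue (convex hull (insert x0 (range f))) = measure lebesgue (convex hull \<dots>)" .
  have lstd: "std \<in> lmeasurable" using compact by (simp add: lmeasurable_compact)
  have "measure lebesgue (g ` std) = \<bar>det M\<bar> * measure lebesgue std"
    unfolding g_def by (subst measure_linear_image_gen) (auto simp: lstd)
  also have "measure lebesgue std = measure lborel std" using compact
    by (intro measure_completion) (auto dest: compact_imp_closed)
  also have "measure lborel std = 1 / fact CARD('n)" unfolding std_def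
    by (simp add: content_std_simplex)
  also have "g ` std = convex hull (g ` insert 0 Basis)" unfolding std_def
    by (rule convex_hull_linear_image) (auto simp: g_def)
  also have "g ` insert 0 Basis = insert 0 (g ` Basis)"
    by (auto simp: g_def)
  also have "g ` Basis = (\<lambda>x. x - x0) ` range f"
    by (auto simp: g_def Basis_vec_def image_iff)
  also note eq [symmetric]
  finally show ?thesis unfolding M_def by simp
qed


lemma card_multisets_of_size:
  assumes "finite A"
  shows "card (multisets_of_size A n) = (n + card A - 1) choose n"
  using assms
proof (induction A arbitrary: n rule: finite_induct)
  case empty
  then show ?case by (cases n) auto
next
  case (insert a A)
  have fin: "finite (multisets_of_size A k)" for k
    using insert by (intro finite_multisets_of_size)
  have "card (multisets_of_size (insert a A) n) = card (SIGMA m:{0..n}. multisets_of_size A (n - m))"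
    using bij_betw_same_card[OF bij_betw_multisets_of_size_insert[OF insert(2), of n]] by simp
  also have "\<dots> = (\<Sum>m\<in>{0..n}. card (multisets_of_size A (n - m)))"
    by (rule card_SigmaI) (auto simp: fin)
  also have "\<dots> = (\<Sum>m\<in>{0..n}. (n - m + card A - 1) choose (n - m))"
    using insert by simp
  also have "\<dots> = (\<Sum>j\<le>n. (j + card A - 1) choose j)"
  proof -
    have "(\<Sum>m\<in>{0..n}. (n - m + card A - 1) choose (n - m)) = (\<Sum>j\<in>(\<lambda>m. n - m) ` {0..n}. (j + card A - 1) choose j)"
      by (subst sum.reindex) (auto simp: inj_on_def)
    also have "(\<lambda>m. n - m) ` {0..n} = {..n}"
    proof
      show "(\<lambda>m. n - m) ` {0..n} \<subseteq> {..n}" by auto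
      show "{..n} \<subseteq> (\<lambda>m. n - m) ` {0..n}"
      proof
        fix x assume "x \<in> {..n}"
        then have "x = n - (n - x)" "n - x \<in> {0..n}" by auto
        then show "x \<in> (\<lambda>m. n - m) ` {0..n}" by (rule image_eqI)
      qed
    qed
    finally show ?thesis .
  qed
  also have "\<dots> = (n + card (insert a A) - 1) choose n"
  proof (cases "card A")
    case 0
    have "(\<Sum>j\<le>n. (j + card A - 1) choose j) = (\<Sum>j\<le>n. if j = 0 then 1 else 0)"
      using 0 by (intro sum.cong) auto
    also have "\<dots> = 1" by simp
    finally show ?thesis using 0 insert by simp
  next
    case (Suc k)
    have "(\<Sum>j\<le>n. (j + card A - 1) choose j) = (\<Sum>j\<le>n. (k + j) choose j)"
      using Suc by (intro sum.cong) (auto simp: add.commute)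
    also have "\<dots> = Suc (k + n) choose n" by (rule sum_choose_lower)
    finally show ?thesis using Suc insert by (simp add: add.commute)
  qed
  finally show ?case .
qed

lemma sum_mset_as_sum:
  fixes M :: "'a::real_vector multiset"
  assumes "finite B" "set_mset M \<subseteq> B"
  shows "sum_mset M = (\<Sum>a\<in>B. real (count M a) *\<^sub>R a)"
  using assms(2)
proof (induction M)
  case empty
  then show ?case by simp
next
  case (add x M)
  have "(\<Sum>a\<in>B. real (count (add_mset x M) a) *\<^sub>R a)
      = (\<Sum>a\<in>B. real (count M a) *\<^sub>R a + (if a = x then x else 0))"
    by (intro sum.cong) (auto simp: algebra_simps)
  also have "\<dots> = (\<Sum>a\<in>B. real (count M a) *\<^sub>R a) + x"
    using add.prems assms(1) by (simp add: sum.distrib)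
  finally show ?case using add by simp
qed

lemma sumset_eq_msets:
  fixes B :: "'a::comm_monoid_add set"
  shows "sumset h B = sum_mset ` multisets_of_size B h"
proof (induction h)
  case 0
  then show ?case by simp
next
  case (Suc h)
  show ?case
  proof safe
    fix z assume "z \<in> sumset (Suc h) B"
    then obtain x y where "z = x + y" "x \<in> sumset h B" "y \<in> B" by auto
    then obtain M where M: "M \<in> multisets_of_size B h" "x = sum_mset M" using Suc by auto
    then have "add_mset y M \<in> multisets_of_size B (Suc h)"
      using \<open>y \<in> B\<close> by (auto simp: multisets_of_size_def)
    moreover have "z = sum_mset (add_mset y M)" using M \<open>z = x + y\<close> by (simp add: add.commute)
    ultimately show "z \<in> sum_mset ` multisets_of_size B (Suc h)" by blast
  next
    fix M assume M: "M \<in> multisets_of_size B (Suc h)"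
    then have "M \<noteq> {#}" by (auto simp: multisets_of_size_def)
    then obtain y M' where M': "M = add_mset y M'" by (metis multiset_cases)
    then have "M' \<in> multisets_of_size B h" "y \<in> B" using M by (auto simp: multisets_of_size_def)
    then have "sum_mset M' \<in> sumset h B" using Suc by auto
    moreover have "sum_mset M = sum_mset M' + y" using M' by (simp add: add.commute)
    ultimately show "sum_mset M \<in> sumset (Suc h) B" using \<open>y \<in> B\<close> by auto
  qed
qed


lemma size_as_sum:
  assumes "finite B" "set_mset M \<subseteq> B"
  shows "size M = (\<Sum>a\<in>B. count M a)"
  using assms(2)
proof (induction M)
  case empty then show ?case by simp
next
  case (add x M)
  have "(\<Sum>a\<in>B. count (add_mset x M) a) = (\<Sum>a\<in>B. count M a + (if a = x then 1 else 0))"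
    by (intro sum.cong) auto
  also have "\<dots> = (\<Sum>a\<in>B. count M a) + 1"
    using add.prems assms(1) by (simp add: sum.distrib)
  finally show ?case using add by simp
qed

lemma count_msetfun:
  assumes "finite B"
  shows "count (\<Sum>a\<in>B. replicate_mset (f a) a) x = (if x \<in> B then f x else 0)"
  using assms by (simp add: count_sum count_replicate_mset sum.delta sum.delta')

lemma set_msetfun:
  assumes "finite B"
  shows "set_mset (\<Sum>a\<in>B. replicate_mset (f a) a) \<subseteq> {x\<in>B. f x > 0}"
proof
  fix x assume "x \<in># (\<Sum>a\<in>B. replicate_mset (f a) a)"
  then have "count (\<Sum>a\<in>B. replicate_mset (f a) a) x > 0" by simp
  then show "x \<in> {x\<in>B. f x > 0}" unfolding count_msetfun[OF assms] by (auto split: if_splits)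
qed

lemma natdiff: "real (nat x) - real (nat (- x)) = real_of_int x"
  by (cases "x \<ge> 0") auto

theorem card_sumset_relation:
  fixes B :: "'a::real_vector set" and lam :: "'a \<Rightarrow> int"
  assumes finB: "finite B"
    and rel0: "(\<Sum>a\<in>B. lam a) = 0"
    and rel1: "(\<Sum>a\<in>B. real_of_int (lam a) *\<^sub>R a) = 0"
    and uniq: "\<And>r::'a\<Rightarrow>int. (\<Sum>a\<in>B. r a) = 0 \<Longrightarrow> (\<Sum>a\<in>B. real_of_int (r a) *\<^sub>R a) = 0
                  \<Longrightarrow> \<exists>k. \<forall>a\<in>B. r a = k * lam a"
    and mdef: "m = (\<Sum>a\<in>B. nat (lam a))" and mpos: "m > 0"
  shows "card (sumset h B) = card (multisets_of_size B h)
           - (if m \<le> h then card (multisets_of_size B (h - m)) else 0)"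
proof -
  define P where "P = (\<Sum>a\<in>B. replicate_mset (nat (lam a)) a)"
  define Q where "Q = (\<Sum>a\<in>B. replicate_mset (nat (- lam a)) a)"
  have cP: "count P x = (if x \<in> B then nat (lam x) else 0)" for x
    unfolding P_def by (rule count_msetfun[OF finB])
  have cQ: "count Q x = (if x \<in> B then nat (- lam x) else 0)" for x
    unfolding Q_def by (rule count_msetfun[OF finB])
  have sP: "set_mset P \<subseteq> B" "set_mset Q \<subseteq> B"
    using set_msetfun[OF finB, of "\<lambda>a. nat (lam a)"] set_msetfun[OF finB, of "\<lambda>a. nat (- lam a)"]
    unfolding P_def Q_def by blast+
  have sPpos: "\<And>x. x \<in># P \<Longrightarrow> lam x > 0"
  proof -
    fix x assume "x \<in># P" then have "count P x > 0" by simp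
    then show "lam x > 0" using cP[of x] by (auto split: if_splits)
  qed
  have sQneg: "\<And>x. x \<in># Q \<Longrightarrow> lam x < 0"
  proof -
    fix x assume "x \<in># Q" then have "count Q x > 0" by simp
    then show "lam x < 0" using cQ[of x] by (auto split: if_splits)
  qed
  have sizeP: "size P = m"
    using size_as_sum[OF finB sP(1)] cP mdef by simp
  have "int (size Q) = (\<Sum>a\<in>B. int (nat (- lam a)))"
    using size_as_sum[OF finB sP(2)] cQ by simp
  also have "\<dots> = (\<Sum>a\<in>B. int (nat (lam a))) - (\<Sum>a\<in>B. lam a)"
    unfolding sum_subtractf[symmetric] by (rule sum.cong) auto
  also have "\<dots> = int m" using rel0 mdef by simp
  finally have sizeQ: "size Q = m" by simp
  have "sum_mset P - sum_mset Q = (\<Sum>a\<in>B. real (nat (lam a)) *\<^sub>R a) - (\<Sum>a\<in>B. real (nat (- lam a)) *\<^sub>R a)"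
    using sum_mset_as_sum[OF finB sP(1)] sum_mset_as_sum[OF finB sP(2)] cP cQ by simp
  also have "\<dots> = (\<Sum>a\<in>B. real_of_int (lam a) *\<^sub>R a)"
    unfolding sum_subtractf[symmetric] scaleR_diff_left[symmetric] by (rule sum.cong) (auto simp: natdiff)
  finally have sumPQ: "sum_mset P = sum_mset Q" using rel1 by simp
  define T where "T = {M \<in> multisets_of_size B h. \<not> P \<subseteq># M}"
  define phi where "phi = (\<lambda>M::'a multiset. size (filter_mset (\<lambda>x. 0 < lam x) M))"
  have reduce: "\<exists>M'\<in>T. sum_mset M' = sum_mset M" if "M \<in> multisets_of_size B h" for M
    using that
  proof (induction "phi M" arbitrary: M rule: less_induct)
    case less
    show ?case
    proof (cases "P \<subseteq># M")
      case False
      then show ?thesis using less.prems unfolding T_def by blast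
    next
      case True
      then obtain C where C: "M = P + C" by (auto simp: mset_subset_eq_exists_conv)
      define M' where "M' = C + Q"
      have "M' \<in> multisets_of_size B h"
        using less.prems C sP sizeP sizeQ unfolding M'_def multisets_of_size_def by auto
      moreover have "phi M' < phi M"
      proof -
        have fQ: "filter_mset (\<lambda>x. 0 < lam x) Q = {#}" using sQneg by (auto dest: sQneg)
        have fP: "filter_mset (\<lambda>x. 0 < lam x) P = P" using sPpos by (auto simp: filter_mset_eq_conv)
        show ?thesis using mpos unfolding phi_def M'_def by (simp add: fQ fP C sizeP)
      qed
      ultimately obtain M'' where "M'' \<in> T" "sum_mset M'' = sum_mset M'"
        using less.hyps by blast
      moreover have "sum_mset M' = sum_mset M" using C sumPQ unfolding M'_def by (simp add: add.commute)
      ultimately show ?thesis by auto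
    qed
  qed
  have img: "sum_mset ` T = sumset h B"
  proof
    show "sum_mset ` T \<subseteq> sumset h B" unfolding sumset_eq_msets T_def by auto
    show "sumset h B \<subseteq> sum_mset ` T"
    proof
      fix z assume "z \<in> sumset h B"
      then obtain M where M: "M \<in> multisets_of_size B h" "z = sum_mset M"
        unfolding sumset_eq_msets by auto
      then obtain M' where M': "M' \<in> T" "sum_mset M' = sum_mset M" using reduce by blast
      then have "z = sum_mset M'" using M by simp
      then show "z \<in> sum_mset ` T" using M'(1) by (rule image_eqI)
    qed
  qed
  have inj: "inj_on sum_mset T"
  proof (rule inj_onI)
    fix M1 M2 assume M1: "M1 \<in> T" and M2: "M2 \<in> T" and eq: "sum_mset M1 = sum_mset M2"
    have s1: "set_mset M1 \<subseteq> B" "size M1 = h" and s2: "set_mset M2 \<subseteq> B" "size M2 = h"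
      using M1 M2 by (auto simp: T_def multisets_of_size_def)
    define r where "r = (\<lambda>a. int (count M1 a) - int (count M2 a))"
    have "(\<Sum>a\<in>B. r a) = int (size M1) - int (size M2)"
      using size_as_sum[OF finB s1(1)] size_as_sum[OF finB s2(1)] by (simp add: r_def sum_subtractf)
    then have r0: "(\<Sum>a\<in>B. r a) = 0" using s1 s2 by simp
    have "(\<Sum>a\<in>B. real_of_int (r a) *\<^sub>R a) = sum_mset M1 - sum_mset M2"
      using sum_mset_as_sum[OF finB s1(1)] sum_mset_as_sum[OF finB s2(1)]
      by (simp add: r_def sum_subtractf[symmetric] scaleR_diff_left)
    then have r1: "(\<Sum>a\<in>B. real_of_int (r a) *\<^sub>R a) = 0" using eq by simp
    obtain k where k: "\<And>a. a \<in> B \<Longrightarrow> r a = k * lam a" using uniq[OF r0 r1] by blast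
    have "\<not> P \<subseteq># M1" "\<not> P \<subseteq># M2" using M1 M2 by (auto simp: T_def)
    have "k = 0"
    proof (rule ccontr)
      assume "k \<noteq> 0"
      then consider "k > 0" | "k < 0" by linarith
      then show False
      proof cases
        case 1
        have "P \<subseteq># M1"
        proof (rule mset_subset_eqI)
          fix a show "count P a \<le> count M1 a"
          proof (cases "a \<in> B \<and> lam a > 0")
            case True
            then have "int (count M1 a) = int (count M2 a) + k * lam a" using k[of a] by (simp add: r_def)
            moreover have "k * lam a \<ge> lam a" using 1 True by (simp add: mult_le_cancel_right1)
            ultimately have "lam a \<le> int (count M1 a)" by linarith
            then show ?thesis using cP[of a] True by simp
          qed (use cP in auto)
        qed
        then show False using \<open>\<not> P \<subseteq># M1\<close> by simp
      next
        case 2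
        have "P \<subseteq># M2"
        proof (rule mset_subset_eqI)
          fix a show "count P a \<le> count M2 a"
          proof (cases "a \<in> B \<and> lam a > 0")
            case True
            then have "int (count M2 a) = int (count M1 a) + (- k) * lam a" using k[of a] by (simp add: r_def)
            moreover have "(- k) * lam a \<ge> lam a"
            proof -
              have "1 \<le> - k" using 2 by simp
              then have "1 * lam a \<le> (- k) * lam a" using True by (intro mult_right_mono) auto
              then show ?thesis by simp
            qed
            ultimately have "lam a \<le> int (count M2 a)" by linarith
            then show ?thesis using cP[of a] True by simp
          qed (use cP in auto)
        qed
        then show False using \<open>\<not> P \<subseteq># M2\<close> by simp
      qed
    qed
    show "M1 = M2"
    proof (rule multiset_eqI)
      fix a show "count M1 a = count M2 a"
      proof (cases "a \<in> B")
        case True then show ?thesis using k[of a] \<open>k = 0\<close> by (simp add: r_def)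
      next
        case False
        then have "a \<notin># M1" "a \<notin># M2" using s1 s2 by auto
        then show ?thesis by (simp add: not_in_iff)
      qed
    qed
  qed
  have cardT: "card (sumset h B) = card T"
    using card_image[OF inj] img by simp
  define U where "U = {M \<in> multisets_of_size B h. P \<subseteq># M}"
  have fin: "finite (multisets_of_size B h)" using finB by blast
  have TU: "T = multisets_of_size B h - U" by (auto simp: T_def U_def)
  have "card T = card (multisets_of_size B h) - card U"
    unfolding TU by (rule card_Diff_subset) (use fin in \<open>auto simp: U_def\<close>)
  moreover have "card U = (if m \<le> h then card (multisets_of_size B (h - m)) else 0)"
  proof (cases "m \<le> h")
    case True
    have "U = (\<lambda>C. P + C) ` multisets_of_size B (h - m)"
    proof safe
      fix M assume "M \<in> U"
      then obtain C where C: "M = P + C" "set_mset M \<subseteq> B" "size M = h"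
        by (auto simp: U_def mset_subset_eq_exists_conv multisets_of_size_def)
      then have "C \<in> multisets_of_size B (h - m)" using sizeP by (auto simp: multisets_of_size_def)
      then show "M \<in> (\<lambda>C. P + C) ` multisets_of_size B (h - m)" using C by blast
    next
      fix C assume "C \<in> multisets_of_size B (h - m)"
      then show "P + C \<in> U" using True sP sizeP by (auto simp: U_def multisets_of_size_def)
    qed
    moreover have "inj_on (\<lambda>C. P + C) X" for X by (auto simp: inj_on_def)
    ultimately show ?thesis using True by (simp add: card_image)
  next
    case False
    have "U = {}"
    proof (rule ccontr)
      assume "U \<noteq> {}"
      then obtain M where "M \<in> U" by blast
      then have "size P \<le> size M" "size M = h" by (auto simp: U_def multisets_of_size_def size_mset_mono)
      then show False using False sizeP by simp
    qed
    then show ?thesis using False by simp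
  qed
  ultimately show ?thesis using cardT by simp
qed


lemma det_rows_add_multiple:
  fixes A :: "real^'n::finite^'n"
  assumes "row k A = x" "k \<notin> S"
  shows "det (\<chi> i. if i \<in> S then row i A + t i *s x else row i A) = det A"
proof -
  have "finite S" by simp
  then show ?thesis using assms(2)
  proof (induction S rule: finite_induct)
    case empty
    have "(\<chi> i. if i \<in> {} then row i A + t i *s x else row i A) = A"
      by (simp add: row_def vec_eq_iff)
    then show ?case by simp
  next
    case (insert j S)
    define M where "M = (\<chi> i. if i \<in> S then row i A + t i *s x else row i A)"
    have jk: "j \<noteq> k" using insert by auto
    have rowM: "row i M = (if i \<in> S then row i A + t i *s x else row i A)" for i
      by (simp add: M_def row_def vec_eq_iff)
    have "(\<chi> i. if i \<in> insert j S then row i A + t i *s x else row i A)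
        = (\<chi> l. if l = j then row j M + t j *s row k M else row l M)"
      using insert jk assms(1) by (auto simp: rowM vec_eq_iff)
    also have "det \<dots> = det M" by (rule det_row_operation[OF jk])
    also have "\<dots> = det A" using insert by (simp add: M_def)
    finally show ?case .
  qed
qed

lemma det_rank_one_rows:
  fixes Z :: "real^'n::finite^'n"
  shows "det (\<chi> i. row i Z + t i *s x) = det Z + (\<Sum>j\<in>UNIV. t j * det (\<chi> i. if i = j then x else row i Z))"
proof -
  have gen: "det (\<chi> i. if i \<in> S then row i Z + t i *s x else row i Z)
      = det Z + (\<Sum>j\<in>S. t j * det (\<chi> i. if i = j then x else row i Z))" for S
  proof -
    have "finite S" by simp
    then show ?thesis
    proof (induction S rule: finite_induct)
      case empty
      have "(\<chi> i. if i \<in> {} then row i Z + t i *s x else row i Z) = Z"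
        by (simp add: row_def vec_eq_iff)
      then show ?case by simp
    next
      case (insert k S)
      define M where "M = (\<chi> i. if i \<in> S then row i Z + t i *s x else row i Z)"
      have rowM: "row i M = (if i \<in> S then row i Z + t i *s x else row i Z)" for i
        by (simp add: M_def row_def vec_eq_iff)
      have "(\<chi> i. if i \<in> insert k S then row i Z + t i *s x else row i Z)
          = (\<chi> i. if i = k then row k M + t k *s x else row i M)"
        using insert by (auto simp: rowM vec_eq_iff)
      also have "det \<dots> = det (\<chi> i. if i = k then row k M else row i M)
                         + det (\<chi> i. if i = k then t k *s x else row i M)"
        by (rule det_row_add)
      also have "(\<chi> i. if i = k then row k M else row i M) = M"
        by (simp add: row_def vec_eq_iff)
      also have "det (\<chi> i. if i = k then t k *s x else row i M) = t k * det (\<chi> i. if i = k then x else row i M)"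
        by (rule det_row_mul)
      also have "det (\<chi> i. if i = k then x else row i M) = det (\<chi> i. if i = k then x else row i Z)"
      proof -
        define A where "A = (\<chi> i. if i = k then x else row i Z)"
        have rowA: "row i A = (if i = k then x else row i Z)" for i
          by (simp add: A_def row_def vec_eq_iff)
        have "(\<chi> i. if i = k then x else row i M) = (\<chi> i. if i \<in> S then row i A + t i *s x else row i A)"
          using insert by (auto simp: rowA rowM vec_eq_iff)
        also have "det \<dots> = det A"
          by (rule det_rows_add_multiple) (use insert in \<open>auto simp: rowA\<close>)
        finally show ?thesis by (simp add: A_def)
      qed
      finally show ?case using insert by (simp add: M_def algebra_simps)
    qed
  qed
  have "(\<chi> i. row i Z + t i *s x) = (\<chi> i. if i \<in> UNIV then row i Z + t i *s x else row i Z)" by simp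
  then show ?thesis using gen[of UNIV] by simp
qed

lemma det_rank_one_cols:
  fixes Z :: "real^'n::finite^'n"
  shows "det (\<chi> i j. Z$i$j + t j * x$i) = det Z + (\<Sum>j\<in>UNIV. t j * det (\<chi> i l. if l = j then x$i else Z$i$l))"
proof -
  have "det (\<chi> i j. Z$i$j + t j * x$i) = det (transpose (\<chi> i j. Z$i$j + t j * x$i))" by simp
  also have "transpose (\<chi> i j. Z$i$j + t j * x$i) = (\<chi> i. row i (transpose Z) + t i *s x)"
    by (simp add: transpose_def row_def vec_eq_iff)
  also have "det \<dots> = det (transpose Z) + (\<Sum>j\<in>UNIV. t j * det (\<chi> i. if i = j then x else row i (transpose Z)))"
    by (rule det_rank_one_rows)
  finally have *: "det (\<chi> i j. Z$i$j + t j * x$i) = det (transpose Z) + (\<Sum>j\<in>UNIV. t j * det (\<chi> i. if i = j then x else row i (transpose Z)))" .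
  have eq: "(\<chi> i. if i = j then x else row i (transpose Z)) = transpose (\<chi> i l. if l = j then x$i else Z$i$l)" for j
    by (simp add: transpose_def row_def vec_eq_iff)
  show ?thesis unfolding * eq by simp
qed

lemma det_Ints:
  fixes M :: "real^'n::finite^'n"
  assumes "\<And>i j. M$i$j \<in> \<int>"
  shows "det M \<in> \<int>"
  unfolding det_def using assms by (intro Ints_sum Ints_mult Ints_prod) auto


lemma negligible_convex_hull_small:
  fixes S :: "(real^'n::finite) set"
  assumes "finite S" "card S \<le> CARD('n)"
  shows "negligible (convex hull S)"
proof (cases "S = {}")
  case True then show ?thesis by simp
next
  case False
  then obtain x0 where x0: "x0 \<in> S" by blast
  define T where "T = (\<lambda>s. s - x0) ` (S - {x0})"
  have finT: "finite T" using assms(1) by (simp add: T_def)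
  have "card T \<le> card (S - {x0})" unfolding T_def by (rule card_image_le) (use assms in simp)
  also have "\<dots> = card S - 1" using x0 assms(1) by simp
  finally have cT1: "card T \<le> card S - 1" .
  have "card S > 0" using x0 assms(1) card_gt_0_iff by blast
  then have cT: "card T < CARD('n)" using cT1 assms(2) by linarith
  have "dim (span T) \<le> card T" by (rule dim_le_card) (auto simp: finT)
  then have "dim (span T) < DIM(real^'n)" using cT by simp
  then have neg: "negligible (span T)" by (rule negligible_lowdim)
  have "convex hull S \<subseteq> (+) x0 ` span T"
  proof (rule hull_minimal)
    show "S \<subseteq> (+) x0 ` span T"
    proof
      fix s assume "s \<in> S"
      then have "s - x0 \<in> span T"
        by (cases "s = x0") (auto simp: T_def intro: span_base span_zero)
      then show "s \<in> (+) x0 ` span T" by (rule rev_image_eqI) simp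
    qed
    show "convex ((+) x0 ` span T)"
      by (intro convex_translation subspace_imp_convex subspace_span)
  qed
  then show ?thesis using negligible_translation[OF neg, of x0] negligible_subset by blast
qed

locale circ_setup =
  fixes B :: "(real^'n::finite) set" and a0 c :: "real^'n" and w :: "'n \<Rightarrow> real^'n"
  assumes B_eq: "B = insert a0 (insert c (range (\<lambda>j. a0 + w j)))"
    and c_notin: "c \<notin> range (\<lambda>j. a0 + w j)" and c_ne: "c \<noteq> a0"
    and w_ne0: "\<And>j. w j \<noteq> 0"
    and w_inj: "inj w"
    and detW: "det (\<chi> i j. w j $ i) \<noteq> 0"
    and intg: "\<And>a i. a \<in> B \<Longrightarrow> a $ i \<in> \<int>"
    and gen: "\<And>i. \<exists>k::real^'n \<Rightarrow> int. sum k B = 0 \<and> axis i 1 = (\<Sum>a\<in>B. real_of_int (k a) *\<^sub>R a)"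
begin

definition "b j = a0 + w j"
definition "W = (\<chi> i j. w j $ i)"
definition "u = c - a0"
definition "D = det W"
definition "Dk k = det (\<chi> i j. if j = k then u$i else W$i$j)"

lemma b_inj: "inj b"
  using w_inj by (auto simp: inj_def b_def)

lemma B_eq': "B = insert a0 (insert c (range b))"
  using B_eq by (simp add: b_def[abs_def])

lemma a0_notin: "a0 \<notin> range b"
  using w_ne0 by (auto simp: b_def)

lemma c_notin': "c \<notin> range b"
  using c_notin by (simp add: b_def[abs_def])

lemma finB: "finite B"
  by (simp add: B_eq')

lemma sumB: "sum f B = f a0 + f c + (\<Sum>j\<in>UNIV. f (b j))"
proof -
  have "sum f B = f a0 + sum f (insert c (range b))"
    unfolding B_eq' using a0_notin c_ne by (subst sum.insert) auto
  also have "sum f (insert c (range b)) = f c + sum f (range b)"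
    using c_notin' by (subst sum.insert) auto
  also have "sum f (range b) = (\<Sum>j\<in>UNIV. f (b j))"
    using b_inj by (simp add: sum.reindex)
  finally show ?thesis by (simp add: add.assoc)
qed

lemma D_ne0: "D \<noteq> 0" using detW by (simp add: D_def W_def)

lemma W_inv: obtains Wi where "W ** Wi = mat 1" "Wi ** W = mat 1"
  using D_ne0 unfolding D_def invertible_det_nz[symmetric] invertible_def by blast

lemma W_mult: "W *v y = (\<Sum>j\<in>UNIV. y $ j *\<^sub>R w j)"
  by (simp add: matrix_mult_sum W_def column_def scalar_mult_eq_scaleR vec_eq_iff)

lemma W_inj0: "W *v y = 0 \<Longrightarrow> y = 0"
proof -
  assume "W *v y = 0"
  obtain Wi where "Wi ** W = mat 1" by (rule W_inv)
  then have "y = Wi *v (W *v y)" by (simp add: matrix_vector_mul_assoc)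
  then show "y = 0" using \<open>W *v y = 0\<close> by simp
qed

definition "xv = (SOME v. W *v v = u)"

lemma Wx: "W *v xv = u"
proof -
  obtain Wi where "W ** Wi = mat 1" by (rule W_inv)
  then have "W *v (Wi *v u) = u" by (simp add: matrix_vector_mul_assoc)
  then show ?thesis unfolding xv_def by (rule someI)
qed

lemma Dk_eq: "Dk k = xv $ k * D"
  using cramer_lemma[where A=W and x=xv and k=k] unfolding Dk_def D_def Wx by simp

lemma rel_shift:
  "(\<Sum>a\<in>B. r a *\<^sub>R a) = (sum r B) *\<^sub>R a0 + r c *\<^sub>R u + W *v (\<chi> j. r (b j))"
proof -
  have "(\<Sum>a\<in>B. r a *\<^sub>R a) = r a0 *\<^sub>R a0 + r c *\<^sub>R c + (\<Sum>j\<in>UNIV. r (b j) *\<^sub>R (a0 + w j))"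
    by (simp add: sumB b_def)
  also have "\<dots> = (r a0 + r c + (\<Sum>j\<in>UNIV. r (b j))) *\<^sub>R a0 + r c *\<^sub>R (c - a0) + (\<Sum>j\<in>UNIV. r (b j) *\<^sub>R w j)"
    by (simp add: algebra_simps sum.distrib scaleR_sum_left)
  finally show ?thesis by (simp add: sumB W_mult u_def)
qed

definition "mu a = (if a = a0 then D - sum Dk UNIV else if a = c then - D else Dk (inv b a))"

lemma mu_a0: "mu a0 = D - sum Dk UNIV" by (simp add: mu_def)
lemma mu_c: "mu c = - D" using c_ne by (simp add: mu_def)
lemma mu_b: "mu (b j) = Dk j"
proof -
  have "b j \<noteq> a0" "b j \<noteq> c" using a0_notin c_notin' by (metis rangeI)+
  then show ?thesis by (simp add: mu_def inv_f_f[OF b_inj])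
qed

lemma mu_rel0: "sum mu B = 0"
  by (simp add: sumB mu_a0 mu_c mu_b)

lemma mu_rel1: "(\<Sum>a\<in>B. mu a *\<^sub>R a) = 0"
proof -
  have "(\<chi> j. mu (b j)) = D *\<^sub>R xv" by (simp add: mu_b Dk_eq vec_eq_iff)
  then have "W *v (\<chi> j. mu (b j)) = D *\<^sub>R u"
    by (simp add: Wx matrix_vector_mult_scaleR)
  then show ?thesis by (simp add: rel_shift mu_rel0 mu_c)
qed

lemma uniq_real:
  assumes r0: "sum r B = 0" and r1: "(\<Sum>a\<in>B. r a *\<^sub>R a) = 0"
  shows "\<forall>a\<in>B. r a = (- r c / D) * mu a"
proof -
  define s where "s = - r c / D"
  define r' where "r' a = r a - s * mu a" for a
  have r'0: "sum r' B = 0" by (simp add: r'_def sum_subtractf r0 sum_distrib_left[symmetric] mu_rel0)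
  have r'1: "(\<Sum>a\<in>B. r' a *\<^sub>R a) = 0"
  proof -
    have "(\<Sum>a\<in>B. r' a *\<^sub>R a) = (\<Sum>a\<in>B. r a *\<^sub>R a) - s *\<^sub>R (\<Sum>a\<in>B. mu a *\<^sub>R a)"
      by (simp add: r'_def scaleR_diff_left sum_subtractf scaleR_sum_right)
    then show ?thesis by (simp add: r1 mu_rel1)
  qed
  have r'c: "r' c = 0" using D_ne0 by (simp add: r'_def s_def mu_c)
  have "W *v (\<chi> j. r' (b j)) = 0" using r'1 by (simp add: rel_shift r'0 r'c)
  then have "(\<chi> j. r' (b j)) = 0" by (rule W_inj0)
  then have r'b: "r' (b j) = 0" for j by (simp add: vec_eq_iff)
  have r'a0: "r' a0 = 0" using r'0 by (simp add: sumB r'c r'b)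
  have "\<forall>a\<in>B. r' a = 0" using r'a0 r'c r'b by (auto simp: B_eq')
  then show ?thesis by (auto simp: r'_def s_def)
qed

lemma u_int: "u $ i \<in> \<int>"
  using intg[of c i] intg[of a0 i] by (simp add: u_def B_eq')

lemma w_int: "w j $ i \<in> \<int>"
proof -
  have "b j \<in> B" by (simp add: B_eq')
  then have "(b j - a0) $ i \<in> \<int>" using intg[of "b j" i] intg[of a0 i] by (simp add: B_eq')
  then show ?thesis by (simp add: b_def)
qed

lemma D_int: "D \<in> \<int>"
  unfolding D_def W_def by (rule det_Ints) (simp add: w_int)

lemma Dk_int: "Dk k \<in> \<int>"
  unfolding Dk_def W_def by (rule det_Ints) (simp add: w_int u_int)

lemma mu_int: "mu a \<in> \<int>"
proof -
  have "sum Dk UNIV \<in> \<int>" by (intro Ints_sum Dk_int)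
  then show ?thesis using D_int Dk_int by (simp add: mu_def)
qed

lemma uniq_int:
  fixes r :: "real^'n \<Rightarrow> int"
  assumes r0: "sum r B = 0" and r1: "(\<Sum>a\<in>B. real_of_int (r a) *\<^sub>R a) = 0"
  shows "r c / D \<in> \<int>"
proof (cases "r c = 0")
  case True then show ?thesis by simp
next
  case False
  define rc where "rc = real_of_int (r c)"
  have rc0: "rc \<noteq> 0" using False by (simp add: rc_def)
  define rb where "rb = (\<chi> j. real_of_int (r (b j)))"
  have "real_of_int (sum r B) = 0" using r0 by simp
  then have r0': "(\<Sum>a\<in>B. real_of_int (r a)) = 0" by simp
  have "0 = rc *\<^sub>R u + W *v rb"
    using r1 r0' rel_shift[of "\<lambda>a. real_of_int (r a)"] by (simp add: rc_def rb_def)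
  then have "W *v (rc *\<^sub>R xv + rb) = 0"
    by (simp add: matrix_vector_right_distrib matrix_vector_mult_scaleR Wx)
  then have "rc *\<^sub>R xv + rb = 0" by (rule W_inj0)
  then have rcx: "rc *\<^sub>R xv = - rb" by (simp add: eq_neg_iff_add_eq_0)
  have rcx_int: "(rc *\<^sub>R xv) $ i \<in> \<int>" for i by (simp add: rcx rb_def)
  obtain kk where kk: "\<And>i. sum (kk i) B = 0 \<and> axis i 1 = (\<Sum>a\<in>B. real_of_int (kk i a) *\<^sub>R a)"
  proof -
    have "\<forall>i. \<exists>k::real^'n \<Rightarrow> int. sum k B = 0 \<and> axis i 1 = (\<Sum>a\<in>B. real_of_int (k a) *\<^sub>R a)"
      using gen by blast
    then have "\<exists>kk. \<forall>i. sum (kk i) B = 0 \<and> axis i 1 = (\<Sum>a\<in>B. real_of_int (kk i a) *\<^sub>R a)"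
      by (rule choice)
    then show ?thesis using that by blast
  qed
  define z where "z q = (\<chi> j. real_of_int (kk q (b j)))" for q
  define t where "t q = real_of_int (kk q c)" for q
  define Z where "Z = (\<chi> p q. z q $ p)"
  define Y where "Y = (\<chi> p q. Z $ p $ q + t q * xv $ p)"
  have colY: "axis q 1 = W *v (\<chi> p. Y $ p $ q)" for q
  proof -
    have "axis q 1 = (\<Sum>a\<in>B. real_of_int (kk q a) *\<^sub>R a)" using kk by blast
    also have "\<dots> = t q *\<^sub>R u + W *v z q"
    proof -
      have "real_of_int (sum (kk q) B) = 0" using kk[of q] by simp
      then have "(\<Sum>a\<in>B. real_of_int (kk q a)) = 0" by simp
      then show ?thesis using rel_shift[of "\<lambda>a. real_of_int (kk q a)"] by (simp add: t_def z_def)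
    qed
    also have "\<dots> = W *v (t q *\<^sub>R xv + z q)"
      by (simp add: matrix_vector_right_distrib matrix_vector_mult_scaleR Wx)
    also have "t q *\<^sub>R xv + z q = (\<chi> p. Y $ p $ q)"
      by (simp add: Y_def Z_def vec_eq_iff algebra_simps)
    finally show ?thesis .
  qed
  have "W ** Y = mat 1"
  proof -
    have "(W ** Y) $ p $ q = mat 1 $ p $ q" for p q
    proof -
      have "(W ** Y) $ p $ q = (W *v (\<chi> p. Y $ p $ q)) $ p"
        by (simp add: matrix_matrix_mult_def matrix_vector_mult_def)
      also have "\<dots> = axis q 1 $ p" using colY[of q] by simp
      also have "\<dots> = mat 1 $ p $ q" by (simp add: axis_def mat_def)
      finally show ?thesis .
    qed
    then show ?thesis by (simp add: vec_eq_iff)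
  qed
  then have "det (W ** Y) = 1" by simp
  then have "D * det Y = 1" unfolding D_def by (simp add: det_mul)
  then have DY: "1 / D = det Y" using D_ne0 by (simp add: field_simps)
  define dq where "dq q = det (\<chi> i l. if l = q then (rc *\<^sub>R xv) $ i else Z $ i $ l)" for q
  have eqY: "det Y = det Z + (\<Sum>q\<in>UNIV. (t q / rc) * dq q)"
  proof -
    have "Y = (\<chi> p q. Z $ p $ q + (t q / rc) * (rc *\<^sub>R xv) $ p)"
      using rc0 by (simp add: Y_def vec_eq_iff)
    then show ?thesis using det_rank_one_cols[of Z "\<lambda>q. t q / rc" "rc *\<^sub>R xv"] by (simp add: dq_def)
  qed
  have "rc * det Y = rc * det Z + (\<Sum>q\<in>UNIV. rc * ((t q / rc) * dq q))"
    unfolding eqY by (simp add: distrib_left sum_distrib_left)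
  also have "(\<Sum>q\<in>UNIV. rc * ((t q / rc) * dq q)) = (\<Sum>q\<in>UNIV. t q * dq q)"
    using rc0 by (intro sum.cong) auto
  finally have eq2: "rc * det Y = rc * det Z + (\<Sum>q\<in>UNIV. t q * dq q)" .
  have "rc * det Z + (\<Sum>q\<in>UNIV. t q * dq q) \<in> \<int>"
  proof (intro Ints_add Ints_mult Ints_sum)
    show "rc \<in> \<int>" by (simp add: rc_def)
    show "det Z \<in> \<int>" by (rule det_Ints) (simp add: Z_def z_def)
    show "t q \<in> \<int>" for q by (simp add: t_def)
    show "dq q \<in> \<int>" for q
      unfolding dq_def by (rule det_Ints) (use rcx_int in \<open>auto simp: Z_def z_def\<close>)
  qed
  then have "rc * det Y \<in> \<int>" using eq2 by simp
  moreover have "rc / D = rc * det Y"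
  proof -
    have "rc / D = rc * (1 / D)" by simp
    then show ?thesis using DY by simp
  qed
  ultimately have "rc / D \<in> \<int>" by simp
  then show ?thesis by (simp add: rc_def)
qed

end


context circ_setup
begin

definition "sg = (if mu a0 < 0 then -1 else (1::real))"
definition "lam a = (floor (sg * mu a) :: int)"

lemma sg_sq: "sg * sg = 1" by (simp add: sg_def)
lemma sg_abs: "\<bar>sg\<bar> = 1" by (simp add: sg_def)

lemma lam_real: "real_of_int (lam a) = sg * mu a"
proof -
  obtain k where "mu a = of_int k" using mu_int by (auto elim: Ints_cases)
  then show ?thesis by (simp add: lam_def sg_def)
qed

lemma lam_rel0: "sum lam B = 0"
proof -
  have "(\<Sum>a\<in>B. real_of_int (lam a)) = sg * sum mu B" by (simp add: lam_real sum_distrib_left)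
  then have "(\<Sum>a\<in>B. real_of_int (lam a)) = 0" by (simp add: mu_rel0)
  then have "real_of_int (sum lam B) = 0" by (simp only: of_int_sum)
  then show ?thesis by (simp only: of_int_eq_0_iff)
qed

lemma lam_rel1: "(\<Sum>a\<in>B. real_of_int (lam a) *\<^sub>R a) = 0"
proof -
  have "(\<Sum>a\<in>B. real_of_int (lam a) *\<^sub>R a) = sg *\<^sub>R (\<Sum>a\<in>B. mu a *\<^sub>R a)"
    by (simp add: lam_real scaleR_sum_right)
  then show ?thesis by (simp add: mu_rel1)
qed

lemma mu_lam: "mu a = sg * real_of_int (lam a)"
  using sg_sq by (simp add: lam_real mult.assoc[symmetric])

lemma lam_real_uniq:
  assumes "sum r B = 0" "(\<Sum>a\<in>B. r a *\<^sub>R a) = 0"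
  shows "\<exists>s. \<forall>a\<in>B. r a = s * real_of_int (lam a)"
proof -
  have "\<forall>a\<in>B. r a = (- r c / D) * mu a" by (rule uniq_real[OF assms])
  then have "\<forall>a\<in>B. r a = ((- r c / D) * sg) * real_of_int (lam a)"
    by (simp add: mu_lam mult.assoc)
  then show ?thesis by blast
qed

lemma lam_int_uniq:
  fixes r :: "real^'n \<Rightarrow> int"
  assumes r0: "sum r B = 0" and r1: "(\<Sum>a\<in>B. real_of_int (r a) *\<^sub>R a) = 0"
  shows "\<exists>k. \<forall>a\<in>B. r a = k * lam a"
proof -
  have "real_of_int (sum r B) = 0" using r0 by simp
  then have r0': "(\<Sum>a\<in>B. real_of_int (r a)) = 0" by simp
  have eq: "\<forall>a\<in>B. real_of_int (r a) = (- real_of_int (r c) / D) * mu a"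
    by (rule uniq_real[OF r0' r1])
  have "real_of_int (r c) / D \<in> \<int>" by (rule uniq_int[OF r0 r1])
  then obtain k0 where k0: "real_of_int (r c) / D = of_int k0" by (metis Ints_cases)
  define k where "k = (if mu a0 < 0 then k0 else - k0)"
  have k: "(- real_of_int (r c) / D) * sg = of_int k"
    using k0 by (simp add: k_def sg_def minus_divide_left[symmetric])
  have "\<forall>a\<in>B. r a = k * lam a"
  proof
    fix a assume "a \<in> B"
    then have "real_of_int (r a) = ((- real_of_int (r c) / D) * sg) * real_of_int (lam a)"
      using eq by (simp add: mu_lam mult.assoc)
    also have "\<dots> = real_of_int (k * lam a)" by (simp only: k of_int_mult)
    finally show "r a = k * lam a" by (simp only: of_int_eq_iff)
  qed
  then show ?thesis by blast
qed

lemma lam_a0: "lam a0 \<ge> 0"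
proof -
  have "real_of_int (lam a0) \<ge> 0" by (simp add: lam_real sg_def)
  then show ?thesis by simp
qed

lemma lam_c: "lam c \<noteq> 0"
proof -
  have "real_of_int (lam c) \<noteq> 0" using D_ne0 by (simp add: lam_real sg_def mu_c)
  then show ?thesis by auto
qed

lemma abs_lam: "real_of_int \<bar>lam a\<bar> = \<bar>mu a\<bar>"
  by (simp add: lam_real abs_mult sg_abs)

lemma cardB: "card B = CARD('n) + 2"
proof -
  have "card (range b) = CARD('n)" using b_inj by (simp add: card_image)
  then show ?thesis using a0_notin c_notin' c_ne by (simp add: B_eq')
qed

lemma vol_c: "measure lebesgue (convex hull (B - {c})) = \<bar>D\<bar> / fact CARD('n)"
proof -
  have "B - {c} = insert a0 (range b)" using c_notin' c_ne by (auto simp: B_eq')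
  moreover have "(\<chi> i j. b j $ i - a0 $ i) = W" by (simp add: W_def b_def vec_eq_iff)
  ultimately show ?thesis using content_simplex_gen[of a0 b] by (simp add: D_def)
qed

lemma vol_b: "measure lebesgue (convex hull (B - {b k})) = \<bar>Dk k\<bar> / fact CARD('n)"
proof -
  have "B - {b k} = insert a0 (range (b(k := c)))"
  proof -
    have r: "range (b(k := c)) = insert c (range b - {b k})"
      using b_inj by (auto simp: inj_eq image_iff split: if_splits)
    show ?thesis unfolding r B_eq' using a0_notin c_notin' c_ne by auto
  qed
  moreover have "(\<chi> i j. (b(k := c)) j $ i - a0 $ i) = (\<chi> i j. if j = k then u$i else W$i$j)"
    by (simp add: W_def b_def u_def vec_eq_iff)
  ultimately show ?thesis using content_simplex_gen[of a0 "b(k := c)"] by (simp add: Dk_def)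
qed

lemma vol_simplex:
  assumes "a \<in> B" "a \<noteq> a0"
  shows "measure lebesgue (convex hull (B - {a})) = real_of_int \<bar>lam a\<bar> / fact CARD('n)"
proof -
  consider "a = c" | k where "a = b k" using assms by (auto simp: B_eq')
  then show ?thesis
  proof cases
    case 1 then show ?thesis using abs_lam[of c] by (simp add: vol_c mu_c)
  next
    case 2 then show ?thesis using abs_lam[of a] by (simp add: vol_b mu_b)
  qed
qed

definition "N = {a\<in>B. lam a < 0}"

lemma a0_notin_N: "a0 \<notin> N" using lam_a0 by (auto simp: N_def)

lemma N_ne: "N \<noteq> {}"
proof
  assume "N = {}"
  then have ge: "\<forall>a\<in>B. lam a \<ge> 0" by (auto simp: N_def)
  have "c \<in> B" by (simp add: B_eq')
  then have "lam c > 0" using ge lam_c by force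
  have "sum lam B > 0"
    using sum_pos2[where f=lam, OF finB \<open>c \<in> B\<close> \<open>lam c > 0\<close>] ge by blast
  then show False using lam_rel0 by simp
qed

lemma finN: "finite N" using finB by (simp add: N_def)

lemma hull_union: "convex hull B = (\<Union>a\<in>N. convex hull (B - {a}))"
proof
  show "(\<Union>a\<in>N. convex hull (B - {a})) \<subseteq> convex hull B"
    by (auto intro: hull_mono[THEN subsetD, of "B - {_}" B])
  show "convex hull B \<subseteq> (\<Union>a\<in>N. convex hull (B - {a}))"
  proof
    fix y assume "y \<in> convex hull B"
    then obtain t where t0: "\<forall>x\<in>B. 0 \<le> t x" and t1: "sum t B = 1" and ty: "(\<Sum>x\<in>B. t x *\<^sub>R x) = y"
      unfolding convex_hull_finite[OF finB] by blast
    define q where "q a = t a / (- real_of_int (lam a))" for a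
    define s where "s = Min (q ` N)"
    have "s \<in> q ` N" unfolding s_def using finN N_ne by (intro Min_in) auto
    then obtain i where iN: "i \<in> N" and si: "s = q i" by blast
    have sle: "s \<le> q a" if "a \<in> N" for a unfolding s_def using finN that by (intro Min_le) auto
    have qpos: "q a \<ge> 0" if "a \<in> N" for a
    proof -
      have "t a \<ge> 0" "real_of_int (lam a) < 0" using that t0 by (auto simp: N_def)
      then show ?thesis unfolding q_def by (intro divide_nonneg_pos) auto
    qed
    have s0: "s \<ge> 0" using qpos iN si by simp
    define t' where "t' a = t a + s * real_of_int (lam a)" for a
    have t'0: "\<forall>x\<in>B - {i}. 0 \<le> t' x"
    proof
      fix a assume a: "a \<in> B - {i}"
      show "0 \<le> t' a"
      proof (cases "a \<in> N")
        case True
        then have la: "real_of_int (lam a) < 0" by (simp add: N_def)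
        have "s * (- real_of_int (lam a)) \<le> q a * (- real_of_int (lam a))"
          using sle[OF True] la by (intro mult_right_mono) auto
        also have "\<dots> = t a" using la by (simp add: q_def)
        finally show ?thesis by (simp add: t'_def)
      next
        case False
        then have "real_of_int (lam a) \<ge> 0" using a by (simp add: N_def)
        then show ?thesis using t0 a s0 by (simp add: t'_def)
      qed
    qed
    have t'i: "t' i = 0"
    proof -
      have "real_of_int (lam i) < 0" using iN by (simp add: N_def)
      then show ?thesis by (simp add: t'_def si q_def)
    qed
    have iB: "i \<in> B" using iN by (simp add: N_def)
    have "sum t' B = sum t B + s * sum (\<lambda>a. real_of_int (lam a)) B"
      by (simp add: t'_def sum.distrib sum_distrib_left)
    also have "sum (\<lambda>a. real_of_int (lam a)) B = 0"
    proof -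
      have "real_of_int (sum lam B) = 0" by (simp add: lam_rel0)
      then show ?thesis by simp
    qed
    finally have "sum t' B = 1" using t1 by simp
    then have t'1: "sum t' (B - {i}) = 1" using sum.remove[OF finB iB, of t'] t'i by simp
    have "(\<Sum>x\<in>B. t' x *\<^sub>R x) = y + s *\<^sub>R (\<Sum>a\<in>B. real_of_int (lam a) *\<^sub>R a)"
      by (simp add: t'_def scaleR_add_left sum.distrib scaleR_sum_right ty)
    then have "(\<Sum>x\<in>B. t' x *\<^sub>R x) = y" by (simp add: lam_rel1)
    then have t'y: "(\<Sum>x\<in>B - {i}. t' x *\<^sub>R x) = y" using sum.remove[OF finB iB, of "\<lambda>x. t' x *\<^sub>R x"] t'i by simp
    have fBi: "finite (B - {i})" using finB by simp
    have "y \<in> convex hull (B - {i})"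
      unfolding convex_hull_finite[OF fBi] using t'0 t'1 t'y by blast
    then show "y \<in> (\<Union>a\<in>N. convex hull (B - {a}))" using iN by blast
  qed
qed

lemma inter_sub:
  assumes iN: "i \<in> N" and kN: "k \<in> N" and ik: "i \<noteq> k"
  shows "convex hull (B - {i}) \<inter> convex hull (B - {k}) \<subseteq> convex hull (B - {i, k})"
proof
  fix y assume y: "y \<in> convex hull (B - {i}) \<inter> convex hull (B - {k})"
  have fi: "finite (B - {i})" "finite (B - {k})" using finB by auto
  obtain t1 where t10: "\<forall>x\<in>B - {i}. 0 \<le> t1 x" and t11: "sum t1 (B - {i}) = 1" and t1y: "(\<Sum>x\<in>B - {i}. t1 x *\<^sub>R x) = y"
    using y unfolding convex_hull_finite[OF fi(1)] by blast
  obtain t2 where t20: "\<forall>x\<in>B - {k}. 0 \<le> t2 x" and t21: "sum t2 (B - {k}) = 1" and t2y: "(\<Sum>x\<in>B - {k}. t2 x *\<^sub>R x) = y"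
    using y unfolding convex_hull_finite[OF fi(2)] by blast
  have iB: "i \<in> B" and kB: "k \<in> B" using iN kN by (auto simp: N_def)
  define T1 where "T1 a = (if a = i then 0 else t1 a)" for a
  define T2 where "T2 a = (if a = k then 0 else t2 a)" for a
  have T1r: "sum T1 (B - {i}) = sum t1 (B - {i})" by (rule sum.cong) (auto simp: T1_def)
  have T1r': "(\<Sum>x\<in>B - {i}. T1 x *\<^sub>R x) = (\<Sum>x\<in>B - {i}. t1 x *\<^sub>R x)" by (rule sum.cong) (auto simp: T1_def)
  have T1s: "sum T1 B = 1"
    using sum.remove[OF finB iB, of T1] t11 T1r by (simp add: T1_def)
  have T2r: "sum T2 (B - {k}) = sum t2 (B - {k})" by (rule sum.cong) (auto simp: T2_def)
  have T2r': "(\<Sum>x\<in>B - {k}. T2 x *\<^sub>R x) = (\<Sum>x\<in>B - {k}. t2 x *\<^sub>R x)" by (rule sum.cong) (auto simp: T2_def)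
  have T2s: "sum T2 B = 1"
    using sum.remove[OF finB kB, of T2] t21 T2r by (simp add: T2_def)
  have T1y: "(\<Sum>x\<in>B. T1 x *\<^sub>R x) = y"
    using sum.remove[OF finB iB, of "\<lambda>x. T1 x *\<^sub>R x"] t1y T1r' by (simp add: T1_def)
  have T2y: "(\<Sum>x\<in>B. T2 x *\<^sub>R x) = y"
    using sum.remove[OF finB kB, of "\<lambda>x. T2 x *\<^sub>R x"] t2y T2r' by (simp add: T2_def)
  define r where "r a = T2 a - T1 a" for a
  have "sum r B = 0" using T1s T2s by (simp add: r_def sum_subtractf)
  moreover have "(\<Sum>a\<in>B. r a *\<^sub>R a) = 0" using T1y T2y by (simp add: r_def scaleR_diff_left sum_subtractf)
  ultimately obtain s where s: "\<forall>a\<in>B. r a = s * real_of_int (lam a)" using lam_real_uniq by blast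
  have li: "real_of_int (lam i) < 0" and lk: "real_of_int (lam k) < 0" using iN kN by (auto simp: N_def)
  have "T2 i \<ge> 0" using t20 iB ik by (simp add: T2_def)
  moreover have "r i = T2 i" by (simp add: r_def T1_def)
  ultimately have "s * real_of_int (lam i) \<ge> 0" using s iB by simp
  then have sle: "s \<le> 0" using li by (simp add: mult_le_0_iff zero_le_mult_iff)
  have "T1 k \<ge> 0" using t10 kB ik by (simp add: T1_def)
  moreover have "r k = - T1 k" by (simp add: r_def T2_def)
  ultimately have "s * real_of_int (lam k) \<le> 0" using s kB by simp
  then have "s \<ge> 0" using lk by (simp add: mult_le_0_iff)
  then have "s = 0" using sle by simp
  then have "T1 k = 0" using s kB \<open>r k = - T1 k\<close> by simp
  have fik: "finite (B - {i, k})" using finB by simp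
  have "sum T1 (B - {i, k}) = 1"
  proof -
    have "B - {i} = insert k (B - {i, k})" using kB ik by auto
    then have "sum T1 (B - {i}) = T1 k + sum T1 (B - {i, k})" using fik by simp
    moreover have "sum T1 B = T1 i + sum T1 (B - {i})" using sum.remove[OF finB iB] .
    ultimately show ?thesis using T1s \<open>T1 k = 0\<close> by (simp add: T1_def)
  qed
  moreover have "(\<Sum>x\<in>B - {i, k}. T1 x *\<^sub>R x) = y"
  proof -
    have "B - {i} = insert k (B - {i, k})" using kB ik by auto
    then have "(\<Sum>x\<in>B - {i}. T1 x *\<^sub>R x) = T1 k *\<^sub>R k + (\<Sum>x\<in>B - {i, k}. T1 x *\<^sub>R x)" using fik by simp
    moreover have "(\<Sum>x\<in>B. T1 x *\<^sub>R x) = T1 i *\<^sub>R i + (\<Sum>x\<in>B - {i}. T1 x *\<^sub>R x)" using sum.remove[OF finB iB] .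
    ultimately show ?thesis using T1y \<open>T1 k = 0\<close> by (simp add: T1_def)
  qed
  moreover have "\<forall>x\<in>B - {i, k}. 0 \<le> T1 x" using t10 by (simp add: T1_def)
  ultimately show "y \<in> convex hull (B - {i, k})"
    unfolding convex_hull_finite[OF fik] by blast
qed

lemma measure_hull:
  "measure lebesgue (convex hull B) * fact CARD('n) = real (\<Sum>a\<in>B. nat (lam a))"
proof -
  have meas: "convex hull (B - {a}) \<in> lmeasurable" for a
    using finB by (intro lmeasurable_compact finite_imp_compact_convex_hull) simp
  have pw: "pairwise (\<lambda>x y. negligible (convex hull (B - {x}) \<inter> convex hull (B - {y}))) N"
  proof (rule pairwiseI)
    fix i k assume "i \<in> N" "k \<in> N" "i \<noteq> k"
    have iB: "i \<in> B" and kB: "k \<in> B" using \<open>i \<in> N\<close> \<open>k \<in> N\<close> by (auto simp: N_def)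
    have "card (B - {i, k}) = CARD('n)"
      using cardB iB kB \<open>i \<noteq> k\<close> finB by (simp add: card_Diff_subset)
    then have "negligible (convex hull (B - {i, k}))"
      using finB by (intro negligible_convex_hull_small) auto
    then show "negligible (convex hull (B - {i}) \<inter> convex hull (B - {k}))"
      using inter_sub[OF \<open>i \<in> N\<close> \<open>k \<in> N\<close> \<open>i \<noteq> k\<close>] negligible_subset by blast
  qed
  have "measure lebesgue (convex hull B) = (\<Sum>a\<in>N. measure lebesgue (convex hull (B - {a})))"
    unfolding hull_union by (rule measure_negligible_finite_Union_image[OF finN meas pw])
  also have "\<dots> = (\<Sum>a\<in>N. real_of_int \<bar>lam a\<bar> / fact CARD('n))"
  proof (rule sum.cong)
    fix a assume "a \<in> N"
    then have "a \<in> B" "a \<noteq> a0" using a0_notin_N by (auto simp: N_def)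
    then show "measure lebesgue (convex hull (B - {a})) = real_of_int \<bar>lam a\<bar> / fact CARD('n)"
      by (rule vol_simplex)
  qed simp
  finally have "measure lebesgue (convex hull B) * fact CARD('n) = (\<Sum>a\<in>N. real_of_int \<bar>lam a\<bar>)"
    by (simp add: sum_divide_distrib[symmetric])
  also have "(\<Sum>a\<in>N. real_of_int \<bar>lam a\<bar>) = real (\<Sum>a\<in>B. nat (- lam a))"
  proof -
    have "(\<Sum>a\<in>B. nat (- lam a)) = (\<Sum>a\<in>N. nat (- lam a))"
      by (rule sum.mono_neutral_right) (auto simp: finB N_def)
    moreover have "(\<Sum>a\<in>N. real_of_int \<bar>lam a\<bar>) = (\<Sum>a\<in>N. real (nat (- lam a)))"
      by (rule sum.cong) (auto simp: N_def)
    ultimately show ?thesis by simp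
  qed
  also have "(\<Sum>a\<in>B. nat (- lam a)) = (\<Sum>a\<in>B. nat (lam a))"
  proof -
    have "int (\<Sum>a\<in>B. nat (- lam a)) = (\<Sum>a\<in>B. int (nat (- lam a)))" by (rule of_nat_sum)
    also have "\<dots> = (\<Sum>a\<in>B. int (nat (lam a)) - lam a)" by (rule sum.cong) auto
    also have "\<dots> = (\<Sum>a\<in>B. int (nat (lam a))) - sum lam B" by (rule sum_subtractf)
    also have "\<dots> = int (\<Sum>a\<in>B. nat (lam a))" using lam_rel0 by simp
    finally show ?thesis by (simp only: of_nat_eq_iff)
  qed
  finally show ?thesis .
qed

lemma m_pos: "(\<Sum>a\<in>B. nat (lam a)) > 0"
proof (rule ccontr)
  assume "\<not> (\<Sum>a\<in>B. nat (lam a)) > 0"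
  then have "\<forall>a\<in>B. nat (lam a) = 0" using finB by simp
  then have le: "\<forall>a\<in>B. lam a \<le> 0" by auto
  have "c \<in> B" by (simp add: B_eq')
  then have "lam c < 0" using le lam_c by force
  have "sum lam B < 0"
    using sum_strict_mono_ex1[OF finB, of lam "\<lambda>_. 0"] le \<open>c \<in> B\<close> \<open>lam c < 0\<close> by auto
  then show False using lam_rel0 by simp
qed

theorem lam_exists:
  "\<exists>lam::real^'n \<Rightarrow> int. sum lam B = 0 \<and> (\<Sum>a\<in>B. real_of_int (lam a) *\<^sub>R a) = 0
     \<and> (\<forall>r::real^'n \<Rightarrow> int. sum r B = 0 \<longrightarrow> (\<Sum>a\<in>B. real_of_int (r a) *\<^sub>R a) = 0 \<longrightarrow> (\<exists>k. \<forall>a\<in>B. r a = k * lam a))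
     \<and> (\<Sum>a\<in>B. nat (lam a)) > 0
     \<and> measure lebesgue (convex hull B) * fact CARD('n) = real (\<Sum>a\<in>B. nat (lam a))"
  using lam_rel0 lam_rel1 lam_int_uniq m_pos measure_hull by blast

end


lemma setup_exists:
  fixes B :: "(real^'n::finite) set"
  assumes finB: "finite B" and cardB: "card B = CARD('n) + 2"
    and intg: "\<And>a i. a \<in> B \<Longrightarrow> a $ i \<in> \<int>"
    and gen: "\<And>i. \<exists>k::real^'n \<Rightarrow> int. sum k B = 0 \<and> axis i 1 = (\<Sum>a\<in>B. real_of_int (k a) *\<^sub>R a)"
  shows "\<exists>a0 c w. circ_setup B a0 c w"
proof -
  have "B \<noteq> {}" using cardB by auto
  then obtain a0 where a0: "a0 \<in> B" by blast
  define V where "V = (\<lambda>b. b - a0) ` (B - {a0})"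
  have finV: "finite V" using finB by (simp add: V_def)
  have axis_span: "axis i 1 \<in> span V" for i
  proof -
    obtain k where k0: "sum k B = 0" and k1: "axis i 1 = (\<Sum>a\<in>B. real_of_int (k a) *\<^sub>R a)"
      using gen by blast
    have "(\<Sum>a\<in>B. real_of_int (k a) *\<^sub>R (a - a0)) = (\<Sum>a\<in>B. real_of_int (k a) *\<^sub>R a) - (\<Sum>a\<in>B. real_of_int (k a)) *\<^sub>R a0"
      by (simp add: scaleR_diff_right sum_subtractf scaleR_sum_left)
    also have "(\<Sum>a\<in>B. real_of_int (k a)) = 0"
    proof -
      have "real_of_int (sum k B) = 0" using k0 by simp
      then show ?thesis by (simp only: of_int_sum)
    qed
    finally have eq: "axis i 1 = (\<Sum>a\<in>B. real_of_int (k a) *\<^sub>R (a - a0))" using k1 by simp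
    have "(\<Sum>a\<in>B. real_of_int (k a) *\<^sub>R (a - a0)) \<in> span V"
    proof (rule span_sum)
      fix a assume "a \<in> B"
      show "real_of_int (k a) *\<^sub>R (a - a0) \<in> span V"
      proof (cases "a = a0")
        case True then show ?thesis by (simp add: span_zero)
      next
        case False
        then have "a - a0 \<in> V" using \<open>a \<in> B\<close> by (auto simp: V_def)
        then show ?thesis by (intro span_scale span_base)
      qed
    qed
    then show ?thesis using eq by simp
  qed
  have spanV: "span V = UNIV"
  proof -
    have "Basis \<subseteq> span V" using axis_span by (auto simp: Basis_vec_def)
    then have "span Basis \<subseteq> span V" by (rule span_minimal) (rule subspace_span)
    then show ?thesis by auto
  qed
  obtain K where KV: "K \<subseteq> V" and indK: "independent K" and VK: "V \<subseteq> span K"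
    by (rule maximal_independent_subset)
  have spanK: "span K = UNIV"
    using VK spanV by (metis span_minimal subspace_span top.extremum_uniqueI)
  have finK: "finite K" using KV finV finite_subset by blast
  have cardK: "card K = CARD('n)"
  proof -
    have "dim K = card K" by (rule dim_eq_card_independent[OF indK])
    moreover have "dim K = dim (span K)" by (simp add: dim_span)
    ultimately show ?thesis using spanK by simp
  qed
  obtain w where w: "bij_betw w (UNIV::'n set) K"
    using finite_same_card_bij[of "UNIV::'n set" K] finK cardK by auto
  have rw: "range w = K" using w by (simp add: bij_betw_def)
  have w_inj: "inj w" using w by (simp add: bij_betw_def)
  have K0: "0 \<notin> K" using indK dependent_zero by blast
  have w_ne0: "w j \<noteq> 0" for j using K0 rw by auto
  define W where "W = (\<chi> i j. w j $ i)"
  have "columns W = K"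
  proof -
    have "column j W = w j" for j by (simp add: column_def W_def vec_eq_iff)
    then show ?thesis by (auto simp: columns_def rw[symmetric])
  qed
  then have "vec.span (columns W) = UNIV" by (simp add: span_vec_eq spanK)
  then obtain Wi where "W ** Wi = mat 1" using matrix_right_invertible_span_columns by blast
  then have "invertible W" using invertible_right_inverse by blast
  then have detW: "det W \<noteq> 0" by (simp add: invertible_det_nz)
  define S0 where "S0 = insert a0 ((\<lambda>k. a0 + k) ` K)"
  have S0B: "S0 \<subseteq> B"
  proof -
    have "(\<lambda>k. a0 + k) ` K \<subseteq> B" using KV by (auto simp: V_def)
    then show ?thesis using a0 by (simp add: S0_def)
  qed
  have cardS0: "card S0 = CARD('n) + 1"
  proof -
    have "a0 \<notin> (\<lambda>k. a0 + k) ` K" using K0 by auto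
    moreover have "card ((\<lambda>k. a0 + k) ` K) = card K" by (rule card_image) (simp add: inj_on_def)
    ultimately show ?thesis using finK cardK by (simp add: S0_def)
  qed
  have "card (B - S0) = 1"
    using card_Diff_subset[OF finite_subset[OF S0B finB] S0B] cardB cardS0 by simp
  then obtain c where c: "B - S0 = {c}" by (rule card_1_singletonE)
  have rng: "range (\<lambda>j. a0 + w j) = (\<lambda>k. a0 + k) ` K"
    by (simp add: rw[symmetric] image_image)
  have Beq: "B = insert a0 (insert c (range (\<lambda>j. a0 + w j)))"
  proof -
    have "B = S0 \<union> {c}" using S0B c by blast
    then show ?thesis unfolding rng S0_def by auto
  qed
  have cS0: "c \<notin> S0" using c by blast
  have "circ_setup B a0 c w"
  proof
    show "B = insert a0 (insert c (range (\<lambda>j. a0 + w j)))" by (rule Beq)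
    show "c \<notin> range (\<lambda>j. a0 + w j)" using cS0 unfolding rng S0_def by blast
    show "c \<noteq> a0" using cS0 unfolding S0_def by blast
    show "\<And>j. w j \<noteq> 0" by (rule w_ne0)
    show "inj w" by (rule w_inj)
    show "det (\<chi> i j. w j $ i) \<noteq> 0" using detW by (simp add: W_def)
    show "\<And>a i. a \<in> B \<Longrightarrow> a $ i \<in> \<int>" by (rule intg)
    show "\<And>i. \<exists>k::real^'n \<Rightarrow> int. sum k B = 0 \<and> axis i 1 = (\<Sum>a\<in>B. real_of_int (k a) *\<^sub>R a)" by (rule gen)
  qed
  then show ?thesis by blast
qed


lemma lat_inj: "inj lat_to_real"
  by (auto simp: inj_def lat_to_real_def vec_eq_iff)

lemma lat_add: "lat_to_real (x + y) = lat_to_real x + lat_to_real y"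
  by (simp add: lat_to_real_def vec_eq_iff)

lemma lat_diff: "lat_to_real (x - y) = lat_to_real x - lat_to_real y"
  by (simp add: lat_to_real_def vec_eq_iff)

lemma lat_zero: "lat_to_real 0 = 0"
  by (simp add: lat_to_real_def vec_eq_iff)

lemma sumset_lat: "sumset h (lat_to_real ` A) = lat_to_real ` sumset h A"
proof (induction h)
  case 0 then show ?case by (simp add: lat_zero)
next
  case (Suc h)
  show ?case
  proof safe
    fix z assume "z \<in> sumset (Suc h) (lat_to_real ` A)"
    then obtain x y where "z = x + y" "x \<in> sumset h (lat_to_real ` A)" "y \<in> lat_to_real ` A" by auto
    then obtain x' y' where "x' \<in> sumset h A" "y' \<in> A" "x = lat_to_real x'" "y = lat_to_real y'"
      using Suc by auto
    then have "z = lat_to_real (x' + y')" "x' + y' \<in> sumset (Suc h) A"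
      using \<open>z = x + y\<close> by (auto simp: lat_add)
    then show "z \<in> lat_to_real ` sumset (Suc h) A" by blast
  next
    fix z assume "z \<in> sumset (Suc h) A"
    then obtain x y where "z = x + y" "x \<in> sumset h A" "y \<in> A" by auto
    then have "lat_to_real x \<in> sumset h (lat_to_real ` A)" "lat_to_real y \<in> lat_to_real ` A"
      using Suc by auto
    moreover have "lat_to_real z = lat_to_real x + lat_to_real y" using \<open>z = x + y\<close> by (simp add: lat_add)
    ultimately show "lat_to_real z \<in> sumset (Suc h) (lat_to_real ` A)" by auto
  qed
qed

lemma gen_int:
  fixes A :: "(int ^ 'd) set"
  assumes finA: "finite A" and gen: "add_subgroup_gen (diffset A) = UNIV"
  shows "\<exists>k::int^'d \<Rightarrow> int. sum k A = 0 \<and> lat_to_real v = (\<Sum>a\<in>A. real_of_int (k a) *\<^sub>R lat_to_real a)"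
proof -
  define G where "G = {v. \<exists>k::int^'d \<Rightarrow> int. sum k A = 0 \<and> lat_to_real v = (\<Sum>a\<in>A. real_of_int (k a) *\<^sub>R lat_to_real a)}"
  have "diffset A \<subseteq> G"
  proof
    fix v assume "v \<in> diffset A"
    then obtain a b where ab: "v = a - b" "a \<in> A" "b \<in> A" by (auto simp: diffset_def)
    define k where "k x = (if x = a then 1 else 0) - (if x = b then 1 else (0::int))" for x
    have "sum k A = 0" using ab finA by (simp add: k_def sum_subtractf)
    moreover have "(\<Sum>x\<in>A. real_of_int (k x) *\<^sub>R lat_to_real x) = lat_to_real a - lat_to_real b"
    proof -
      have "(\<Sum>x\<in>A. real_of_int (k x) *\<^sub>R lat_to_real x)
          = (\<Sum>x\<in>A. (if x = a then lat_to_real x else 0)) - (\<Sum>x\<in>A. (if x = b then lat_to_real x else 0))"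
        unfolding sum_subtractf[symmetric] by (rule sum.cong) (auto simp: k_def)
      then show ?thesis using ab finA by simp
    qed
    ultimately show "v \<in> G" unfolding G_def using ab by (auto simp: lat_diff)
  qed
  moreover have "0 \<in> G" unfolding G_def by (auto simp: lat_zero intro!: exI[of _ "\<lambda>_. 0"])
  moreover have "\<forall>x\<in>G. \<forall>y\<in>G. x - y \<in> G"
  proof (intro ballI)
    fix x y assume "x \<in> G" "y \<in> G"
    then obtain kx ky where kx: "sum kx A = 0" "lat_to_real x = (\<Sum>a\<in>A. real_of_int (kx a) *\<^sub>R lat_to_real a)"
      and ky: "sum ky A = 0" "lat_to_real y = (\<Sum>a\<in>A. real_of_int (ky a) *\<^sub>R lat_to_real a)"
      unfolding G_def by blast
    have "sum (\<lambda>a. kx a - ky a) A = 0" using kx ky by (simp add: sum_subtractf)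
    moreover have "lat_to_real (x - y) = (\<Sum>a\<in>A. real_of_int (kx a - ky a) *\<^sub>R lat_to_real a)"
      using kx ky by (simp add: lat_diff scaleR_diff_left sum_subtractf)
    ultimately show "x - y \<in> G" unfolding G_def by blast
  qed
  ultimately have "add_subgroup_gen (diffset A) \<subseteq> G"
    unfolding add_subgroup_gen_def by (intro Inter_lower) blast
  then have "v \<in> G" using gen by auto
  then show ?thesis unfolding G_def by blast
qed

theorem theorem1p2:
  fixes A :: "(int ^ 'd) set" and d :: nat
  assumes dim: "CARD('d) = d"
    and finA: "finite A"
    and cardA: "card A = d + 2"
    and gen: "add_subgroup_gen (diffset A) = UNIV"
  defines "V \<equiv> measure lebesgue (convex hull (lat_to_real ` A)) * fact d"
  shows "(\<forall>h::nat. real h < V - real d - 1 \<longrightarrow>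
            card (sumset h A) = (h + d + 1) choose (d + 1)) \<and>
         (\<forall>h::nat. real h \<ge> V - real d - 1 \<longrightarrow>
            real (card (sumset h A)) =
              real ((h + d + 1) choose (d + 1)) - ((real h - V + real d + 1) gchoose (d + 1)))"
proof -
  define B where "B = lat_to_real ` A"
  have finB: "finite B" using finA by (simp add: B_def)
  have "card B = card A" unfolding B_def by (rule card_image[OF inj_on_subset[OF lat_inj subset_UNIV]])
  then have cardB: "card B = CARD('d) + 2" using cardA dim by simp
  have intg: "\<And>a i. a \<in> B \<Longrightarrow> a $ i \<in> \<int>"
    by (auto simp: B_def lat_to_real_def)
  have genB: "\<exists>k::real^'d \<Rightarrow> int. sum k B = 0 \<and> axis i 1 = (\<Sum>a\<in>B. real_of_int (k a) *\<^sub>R a)" for i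
  proof -
    define v :: "int^'d" where "v = (\<chi> j. if j = i then 1 else 0)"
    have lv: "lat_to_real v = axis i 1" by (simp add: v_def lat_to_real_def axis_def vec_eq_iff)
    obtain k where k: "sum k A = 0" "lat_to_real v = (\<Sum>a\<in>A. real_of_int (k a) *\<^sub>R lat_to_real a)"
      using gen_int[OF finA gen, of v] by blast
    define kB where "kB b = k (inv lat_to_real b)" for b
    have injA: "inj_on lat_to_real A" by (rule inj_on_subset[OF lat_inj subset_UNIV])
    have "sum kB B = sum (kB \<circ> lat_to_real) A" unfolding B_def by (rule sum.reindex[OF injA])
    also have "\<dots> = sum k A" by (simp add: kB_def o_def inv_f_f[OF lat_inj])
    finally have s0: "sum kB B = 0" using k by simp
    have "(\<Sum>a\<in>B. real_of_int (kB a) *\<^sub>R a) = (\<Sum>a\<in>A. real_of_int (kB (lat_to_real a)) *\<^sub>R lat_to_real a)"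
      unfolding B_def by (rule sum.reindex[OF injA, unfolded o_def])
    also have "\<dots> = axis i 1" using k lv by (simp add: kB_def inv_f_f[OF lat_inj])
    finally show ?thesis using s0 by metis
  qed
  obtain a0 c w where cs: "circ_setup B a0 c w"
    using setup_exists[OF finB cardB intg genB] by blast
  obtain lam :: "real^'d \<Rightarrow> int" where l0: "sum lam B = 0" and l1: "(\<Sum>a\<in>B. real_of_int (lam a) *\<^sub>R a) = 0"
    and lu: "\<forall>r::real^'d \<Rightarrow> int. sum r B = 0 \<longrightarrow> (\<Sum>a\<in>B. real_of_int (r a) *\<^sub>R a) = 0 \<longrightarrow> (\<exists>k. \<forall>a\<in>B. r a = k * lam a)"
    and mpos: "(\<Sum>a\<in>B. nat (lam a)) > 0"
    and meas: "measure lebesgue (convex hull B) * fact CARD('d) = real (\<Sum>a\<in>B. nat (lam a))"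
    using circ_setup.lam_exists[OF cs] by blast
  define m where "m = (\<Sum>a\<in>B. nat (lam a))"
  have Vm: "V = real m" using meas dim by (simp add: V_def B_def m_def)
  have cs_eq: "card (sumset h A) = card (sumset h B)" for h
  proof -
    have "card (sumset h B) = card (lat_to_real ` sumset h A)" by (simp add: B_def sumset_lat)
    also have "\<dots> = card (sumset h A)" by (rule card_image[OF inj_on_subset[OF lat_inj subset_UNIV]])
    finally show ?thesis by simp
  qed
  have cmos: "card (multisets_of_size B n) = (n + d + 1) choose (d + 1)" for n
  proof -
    have "card (multisets_of_size B n) = (n + card B - 1) choose n" by (rule card_multisets_of_size[OF finB])
    also have "n + card B - 1 = n + d + 1" using cardB dim by simp
    also have "(n + d + 1) choose n = (n + d + 1) choose (d + 1)"
      using binomial_symmetric[of n "n + d + 1"] by simp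
    finally show ?thesis .
  qed
  have main: "card (sumset h A) = ((h + d + 1) choose (d + 1)) - (if m \<le> h then ((h - m + d + 1) choose (d + 1)) else 0)" for h
  proof -
    have "card (sumset h B) = card (multisets_of_size B h) - (if m \<le> h then card (multisets_of_size B (h - m)) else 0)"
    proof (rule card_sumset_relation[OF finB l0 l1])
      show "m = (\<Sum>a\<in>B. nat (lam a))" by (rule m_def)
      show "0 < m" using mpos by (simp add: m_def)
      show "\<exists>k. \<forall>a\<in>B. r a = k * lam a" if "sum r B = 0" "(\<Sum>a\<in>B. real_of_int (r a) *\<^sub>R a) = 0" for r
        using lu that by blast
    qed
    then show ?thesis using cs_eq cmos by simp
  qed
  show ?thesis
  proof (intro conjI allI impI)
    fix h :: nat assume "real h < V - real d - 1"
    then have "\<not> m \<le> h" using Vm by simp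
    then show "card (sumset h A) = (h + d + 1) choose (d + 1)" using main by simp
  next
    fix h :: nat assume hV: "real h \<ge> V - real d - 1"
    show "real (card (sumset h A)) = real ((h + d + 1) choose (d + 1)) - ((real h - V + real d + 1) gchoose (d + 1))"
    proof (cases "m \<le> h")
      case True
      have le: "(h - m + d + 1) choose (d + 1) \<le> (h + d + 1) choose (d + 1)"
        by (rule binomial_right_mono) simp
      have "real h - V + real d + 1 = real (h - m + d + 1)" using True Vm by simp
      then have "(real h - V + real d + 1) gchoose (d + 1) = real (h - m + d + 1) gchoose (d + 1)"
        by (simp only:)
      also have "\<dots> = real ((h - m + d + 1) choose (d + 1))" by (rule binomial_gbinomial[symmetric])
      finally have gb: "(real h - V + real d + 1) gchoose (d + 1) = real ((h - m + d + 1) choose (d + 1))" .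
      show ?thesis using main[of h] True le gb by (simp add: of_nat_diff)
    next
      case False
      have j: "real h - V + real d + 1 = real (h + d + 1 - m)" using False hV Vm by simp
      have "h + d + 1 - m < d + 1" using False by simp
      then have "(real h - V + real d + 1) gchoose (d + 1) = 0"
        unfolding j binomial_gbinomial[symmetric] by simp
      then show ?thesis using main[of h] False by simp
    qed
  qed
qed


end
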